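(* The class $\mathbb{ML}^{\Box}$, regarded as a class of algebras $(L;\wedge,\vee,\neg,\Box)$, is an equational class (a variety). Concretely, an algebra $(L;\wedge,\vee,\neg,\Box)$ belongs to $\mathbb{ML}^{\Box}$ if and only if it satisfies the lattice identities, the identities $x\wedge\neg x\preccurlyeq y$, $y\preccurlyeq\neg(x\wedge\neg x)$, $x\wedge\neg(x\wedge y)\preccurlyeq\neg y$, and the identities $x\vee\neg\Box x\approx 1$, $\Box 1\approx 1$, and $\Box(x\vee\neg y)\wedge y\approx\Box x\wedge y$, where $1$ abbreviates $\neg(x\wedge\neg x)$ and $s\preccurlyeq t$ abbreviates $s\wedge t\approx s$.
   Context: A meet-complemented lattice is a lattice $(L,\le)$ (not necessarily distributive) such that for every $a\in L$ the element $\neg a=\max\{b\in L: a\wedge b\le c\ \text{for all } c\in L\}$ exists; such a lattice is bounded, with bottom $0$ and top $1=\neg(a\wedge\neg a)$. For $a\in L$, the necessity of $a$ is $\Box a=\max\{b\in L: a\vee\neg b=1\}$, when it exists. $\mathbb{ML}^{\Box}$ is the class of meet-complemented lattices in which $\Box a$ exists for every $a$, considered as algebras with operations $\wedge,\vee,\neg,\Box$. *)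

theory Defs
  imports Main
begin

text \<open>An algebra (L; meet, join, neg, box) is given by four operations on a type 'a
  (the carrier is the whole type).\<close>

definition lattice_ids :: "('a \<Rightarrow> 'a \<Rightarrow> 'a) \<Rightarrow> ('a \<Rightarrow> 'a \<Rightarrow> 'a) \<Rightarrow> bool" where
  "lattice_ids meet join \<longleftrightarrow>
     (\<forall>x y z. meet (meet x y) z = meet x (meet y z)) \<and>
     (\<forall>x y z. join (join x y) z = join x (join y z)) \<and>
     (\<forall>x y. meet x y = meet y x) \<and>
     (\<forall>x y. join x y = join y x) \<and>
     (\<forall>x. meet x x = x) \<and>
     (\<forall>x. join x x = x) \<and>
     (\<forall>x y. meet x (join x y) = x) \<and>
     (\<forall>x y. join x (meet x y) = x)"

definition mleq :: "('a \<Rightarrow> 'a \<Rightarrow> 'a) \<Rightarrow> 'a \<Rightarrow> 'a \<Rightarrow> bool" where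
  "mleq meet s t \<longleftrightarrow> meet s t = s"

definition is_max_in :: "('a \<Rightarrow> 'a \<Rightarrow> 'a) \<Rightarrow> 'a set \<Rightarrow> 'a \<Rightarrow> bool" where
  "is_max_in meet S m \<longleftrightarrow> m \<in> S \<and> (\<forall>b\<in>S. mleq meet b m)"

text \<open>Membership in ML-box: (L, meet, join) is a lattice; neg a is the maximum of
  {b. a \<and> b \<le> c for all c}; box a is the maximum of {b. a \<or> neg b = 1}, where
  "= 1" means being the top element, i.e. above every c.\<close>
definition mlbox :: "('a \<Rightarrow> 'a \<Rightarrow> 'a) \<Rightarrow> ('a \<Rightarrow> 'a \<Rightarrow> 'a) \<Rightarrow> ('a \<Rightarrow> 'a) \<Rightarrow> ('a \<Rightarrow> 'a) \<Rightarrow> bool" where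
  "mlbox meet join neg box \<longleftrightarrow>
     lattice_ids meet join \<and>
     (\<forall>a. is_max_in meet {b. \<forall>c. mleq meet (meet a b) c} (neg a)) \<and>
     (\<forall>a. is_max_in meet {b. \<forall>c. mleq meet c (join a (neg b))} (box a))"

definition mlbox_identities :: "('a \<Rightarrow> 'a \<Rightarrow> 'a) \<Rightarrow> ('a \<Rightarrow> 'a \<Rightarrow> 'a) \<Rightarrow> ('a \<Rightarrow> 'a) \<Rightarrow> ('a \<Rightarrow> 'a) \<Rightarrow> bool" where
  "mlbox_identities meet join neg box \<longleftrightarrow>
     lattice_ids meet join \<and>
     (\<forall>x y. mleq meet (meet x (neg x)) y) \<and>
     (\<forall>x y. mleq meet y (neg (meet x (neg x)))) \<and>
     (\<forall>x y. mleq meet (meet x (neg (meet x y))) (neg y)) \<and>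
     (\<forall>x. join x (neg (box x)) = neg (meet x (neg x))) \<and>
     (\<forall>x. box (neg (meet x (neg x))) = neg (meet x (neg x))) \<and>
     (\<forall>x y. meet (box (join x (neg y))) y = meet (box x) y)"

end

theory Submission
  imports Defs
begin

locale lat =
  fixes meet join :: "'a \<Rightarrow> 'a \<Rightarrow> 'a"
  assumes L: "lattice_ids meet join"
begin

abbreviation le (infix "\<sqsubseteq>" 50) where "a \<sqsubseteq> b \<equiv> mleq meet a b"

lemma ma: "meet (meet x y) z = meet x (meet y z)" and ja: "join (join x y) z = join x (join y z)"
  and mc: "meet x y = meet y x" and jc: "join x y = join y x" and mi: "meet x x = x"
  and ji: "join x x = x" and mab: "meet x (join x y) = x" and jab: "join x (meet x y) = x"
  using L unfolding lattice_ids_def by blast+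

lemma refl: "a \<sqsubseteq> a" by (simp add: mleq_def mi)
lemma anti: "a \<sqsubseteq> b \<Longrightarrow> b \<sqsubseteq> a \<Longrightarrow> a = b" by (metis mleq_def mc)
lemma trans: "a \<sqsubseteq> b \<Longrightarrow> b \<sqsubseteq> c \<Longrightarrow> a \<sqsubseteq> c" by (metis mleq_def ma)
lemma lb1: "meet a b \<sqsubseteq> a" by (metis mleq_def ma mc mi)
lemma lb2: "meet a b \<sqsubseteq> b" by (metis mleq_def ma mi)
lemma glb: "c \<sqsubseteq> a \<Longrightarrow> c \<sqsubseteq> b \<Longrightarrow> c \<sqsubseteq> meet a b" by (metis mleq_def ma)
lemma leq_join: "a \<sqsubseteq> c \<longleftrightarrow> join a c = c" by (metis mleq_def mab jab mc jc)
lemma ub1: "a \<sqsubseteq> join a b" by (simp add: mleq_def mab)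
lemma ub2: "b \<sqsubseteq> join a b" by (metis ub1 jc)
lemma lub: "a \<sqsubseteq> c \<Longrightarrow> b \<sqsubseteq> c \<Longrightarrow> join a b \<sqsubseteq> c" by (metis leq_join ja)
lemma jmono: "a \<sqsubseteq> a' \<Longrightarrow> b \<sqsubseteq> b' \<Longrightarrow> join a b \<sqsubseteq> join a' b'"
  by (meson lub trans ub1 ub2)
lemma mmono: "a \<sqsubseteq> a' \<Longrightarrow> b \<sqsubseteq> b' \<Longrightarrow> meet a b \<sqsubseteq> meet a' b'"
  by (meson glb trans lb1 lb2)
lemma meet_le: "a \<sqsubseteq> b \<Longrightarrow> meet a b = a" by (simp add: mleq_def)

end

lemma fwd:
  assumes "mlbox meet join neg box" shows "mlbox_identities meet join neg box"
proof -
  from assms have L: "lattice_ids meet join"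
    and N: "\<And>a. is_max_in meet {b. \<forall>c. mleq meet (meet a b) c} (neg a)"
    and B: "\<And>a. is_max_in meet {b. \<forall>c. mleq meet c (join a (neg b))} (box a)"
    unfolding mlbox_def by auto
  interpret lat meet join by (unfold_locales, rule L)
  have N1: "\<And>a c. meet a (neg a) \<sqsubseteq> c" using N unfolding is_max_in_def by auto
  have N2: "\<And>a b. (\<And>c. meet a b \<sqsubseteq> c) \<Longrightarrow> b \<sqsubseteq> neg a" using N unfolding is_max_in_def by auto
  have B1: "\<And>a c. c \<sqsubseteq> join a (neg (box a))" using B unfolding is_max_in_def by auto
  have B2: "\<And>a b. (\<And>c. c \<sqsubseteq> join a (neg b)) \<Longrightarrow> b \<sqsubseteq> box a" using B unfolding is_max_in_def by auto
  have top: "\<And>y x. y \<sqsubseteq> neg (meet x (neg x))"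
    by (rule N2, meson N1 trans lb1)
  have i3: "\<And>x y. meet x (neg (meet x y)) \<sqsubseteq> neg y"
  proof (rule N2)
    fix x y c
    have "meet y (meet x (neg (meet x y))) = meet (meet x y) (neg (meet x y))"
      by (metis ma mc)
    then show "meet y (meet x (neg (meet x y))) \<sqsubseteq> c" using N1 by simp
  qed
  have i4: "\<And>x. join x (neg (box x)) = neg (meet x (neg x))"
    by (simp add: B1 anti top)
  have i5: "\<And>x. box (neg (meet x (neg x))) = neg (meet x (neg x))"
  proof -
    fix x
    have "neg (meet x (neg x)) \<sqsubseteq> box (neg (meet x (neg x)))"
      by (rule B2) (meson top trans ub1)
    then show "box (neg (meet x (neg x))) = neg (meet x (neg x))" using top anti by blast
  qed
  have nanti: "\<And>a b. a \<sqsubseteq> b \<Longrightarrow> neg b \<sqsubseteq> neg a"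
    by (rule N2) (meson N1 mmono refl trans)
  have i6: "\<And>x y. meet (box (join x (neg y))) y = meet (box x) y"
  proof -
    fix x y
    have 1: "box x \<sqsubseteq> box (join x (neg y))"
      by (rule B2) (metis B1 ja jc jmono refl trans ub2)
    let ?b = "meet (box (join x (neg y))) y"
    have "?b \<sqsubseteq> box x"
    proof (rule B2)
      fix c
      have a: "c \<sqsubseteq> join (join x (neg y)) (neg (box (join x (neg y))))" by (rule B1)
      have "join (neg y) (neg (box (join x (neg y)))) \<sqsubseteq> neg ?b"
        by (meson lub nanti lb1 lb2)
      then have "join (join x (neg y)) (neg (box (join x (neg y)))) \<sqsubseteq> join x (neg ?b)"
        by (metis ja jmono refl)
      then show "c \<sqsubseteq> join x (neg ?b)" using a trans by blast
    qed
    then have "?b \<sqsubseteq> meet (box x) y" using glb lb2 by blast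
    moreover have "meet (box x) y \<sqsubseteq> ?b" using 1 mmono refl by blast
    ultimately show "?b = meet (box x) y" by (rule anti)
  qed
  show ?thesis unfolding mlbox_identities_def using L N1 top i3 i4 i5 i6 by blast
qed

lemma bwd:
  assumes "mlbox_identities meet join neg box" shows "mlbox meet join neg box"
proof -
  from assms have L: "lattice_ids meet join"
    and i1: "\<And>x y. mleq meet (meet x (neg x)) y"
    and i2: "\<And>x y. mleq meet y (neg (meet x (neg x)))"
    and i3: "\<And>x y. mleq meet (meet x (neg (meet x y))) (neg y)"
    and i4: "\<And>x. join x (neg (box x)) = neg (meet x (neg x))"
    and i5: "\<And>x. box (neg (meet x (neg x))) = neg (meet x (neg x))"
    and i6: "\<And>x y. meet (box (join x (neg y))) y = meet (box x) y"
    unfolding mlbox_identities_def by auto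
  interpret lat meet join by (unfold_locales, rule L)
  have N: "is_max_in meet {b. \<forall>c. mleq meet (meet a b) c} (neg a)" for a
    unfolding is_max_in_def
  proof (intro conjI ballI)
    show "neg a \<in> {b. \<forall>c. meet a b \<sqsubseteq> c}" using i1 by auto
    fix b assume "b \<in> {b. \<forall>c. meet a b \<sqsubseteq> c}"
    then have z: "\<And>c. meet a b \<sqsubseteq> c" by auto
    have "meet b a = meet a (neg a)" by (metis anti i1 mc z)
    then have "neg (meet b a) = neg (meet a (neg a))" by simp
    then have "meet b (neg (meet b a)) = b" using i2 meet_le by metis
    then show "b \<sqsubseteq> neg a" using i3 by metis
  qed
  have B: "is_max_in meet {b. \<forall>c. mleq meet c (join a (neg b))} (box a)" for a
    unfolding is_max_in_def
  proof (intro conjI ballI)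
    show "box a \<in> {b. \<forall>c. c \<sqsubseteq> join a (neg b)}" using i2 i4 by auto
    fix b assume "b \<in> {b. \<forall>c. c \<sqsubseteq> join a (neg b)}"
    then have t: "\<And>c. c \<sqsubseteq> join a (neg b)" by auto
    have "join a (neg b) = neg (meet a (neg a))" using t i2 anti by blast
    then have "meet (box (join a (neg b))) b = b"
      using i5 i2 meet_le mc by metis
    then show "b \<sqsubseteq> box a" using i6 mc mleq_def by metis
  qed
  show ?thesis unfolding mlbox_def using L N B by blast
qed

theorem mainTheorem1:
  fixes meet join :: "'a \<Rightarrow> 'a \<Rightarrow> 'a" and neg box :: "'a \<Rightarrow> 'a"
  shows "mlbox meet join neg box \<longleftrightarrow> mlbox_identities meet join neg box"
  using fwd bwd by blast

end
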